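(* Let $\lambda$ be a dominant integral weight of $\mathfrak{sl}_{r+1}$, write $\lambda+\rho=(\ell_1>\ell_2>\cdots>\ell_r>\ell_{r+1}=0)$, and let $b\in\mathcal B(\lambda+\rho)$ with BZL path $\psi_{\mathbf i}(b)=(a_1,\dots,a_N)$. Let $1\le k\le N$ and suppose that $a_k=a_{j,j-i+1}$ in triangular indexing, where $1\le i\le j\le r$ (so that $i_k=i$ and $a_k=\mathbf a_{i,j}$). Put $b'=\tilde e_{i_{k-1}}^{a_{k-1}}\cdots\tilde e_{i_1}^{a_1}b$. Then $\ell_i-\mathbf b_{i,j}$ equals the number of $i$-boxes in the $i$th row of $b'$, and $\ell_{i+1}-\mathbf b_{i+1,j+1}$ equals the number of $(i+1)$-boxes in the $(i+1)$st row of $b'$.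
   Context: Fix $r\ge1$ and $\mathfrak g=\mathfrak{sl}_{r+1}$ with index set $I=\{1,\dots,r\}$, fundamental weights $\omega_1,\dots,\omega_r$, $N=r(r+1)/2$, and $\rho=\sum_i\omega_i$. For a dominant integral weight $\mu=\sum_i m_i\omega_i$, $\mathcal B(\mu)$ is identified (Kashiwara–Nakashima) with the set of semistandard Young tableaux with entries in $\{1,\dots,r+1\}$ of the shape having $m_i$ columns of height $i$; an entry equal to $k$ is a $k$-box. A tableau is identified with the tensor product of its entries read column by column from right to left, each column top to bottom, and $\tilde e_i,\tilde f_i$ act by the signature rule: for each factor write $-$ if it equals $i+1$, $+$ if it equals $i$; repeatedly cancel adjacent $+-$ pairs; $\tilde e_i$ changes the factor of the rightmost remaining $-$ from $i+1$ to $i$ (giving $0$ if none), $\tilde f_i$ changes the factor of the leftmost remaining $+$ from $i$ to $i+1$ (giving $0$ if none). For dominant $\lambda$, $\lambda+\rho$ is viewed as the partition with row lengths $\ell_1>\ell_2>\cdots>\ell_r>\ell_{r+1}=0$ (the shape of tableaux in $\mathcal B(\lambda+\rho)$). Fix the long word $\mathbf i=(i_1,\dots,i_N)=(1,2,1,3,2,1,\dots,r,\dots,2,1)$. The BZL path $\psi_{\mathbf i}(b)=(a_1,\dots,a_N)$: $a_k$ is maximal with $\tilde e_{i_k}^{a_k}\cdots\tilde e_{i_1}^{a_1}b\ne0$. Triangular form: $a_{i,j}=a_{i(i-1)/2+j}$ for $1\le j\le i\le r$; it corresponds to letter $i-j+1$. For $b\in\mathcal B(\lambda+\rho)$ and $1\le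 i\le j\le r$: $\mathbf a_{i,j}$ is the number of $(j+1)$-boxes in rows $1$ through $i$ of $b$; $\mathbf b_{i,j}$ is the number of boxes in the $i$th row of $b$ with entry $\ge j+1$. By convention $\mathbf b_{i,j}=0$ if $i=r+1$ or $j=r+1$. *)

theory Defs
  imports Main
begin

text \<open>Tableaux: T i c is the entry in row i, column c (1-indexed).
  Shapes: l i is the length of row i.\<close>

type_synonym tab = "nat \<Rightarrow> nat \<Rightarrow> nat"

text \<open>Row lengths of lambda + rho, lambda = sum of m_i omega_i with m_i = lam i (1 <= i <= r).
  Row i (1 <= i <= r+1) has length sum_{k=i}^{r} (m_k + 1); in particular l (r+1) = 0.\<close>
definition shape :: "nat \<Rightarrow> (nat \<Rightarrow> nat) \<Rightarrow> nat \<Rightarrow> nat" where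
  "shape r lam i = (\<Sum>k\<in>{i..r}. lam k + 1)"

definition is_cell :: "(nat \<Rightarrow> nat) \<Rightarrow> nat \<Rightarrow> nat \<Rightarrow> bool" where
  "is_cell l i c \<longleftrightarrow> 1 \<le> i \<and> 1 \<le> c \<and> c \<le> l i"

text \<open>Semistandard Young tableaux of shape l with entries in {1..r+1}
  (entries outside the shape are set to 0, so that tableaux are canonical).\<close>
definition SSYT :: "nat \<Rightarrow> (nat \<Rightarrow> nat) \<Rightarrow> tab set" where
  "SSYT r l = {T.
     (\<forall>i c. is_cell l i c \<longrightarrow> 1 \<le> T i c \<and> T i c \<le> r + 1) \<and>
     (\<forall>i c. \<not> is_cell l i c \<longrightarrow> T i c = 0) \<and>
     (\<forall>i c. is_cell l i (Suc c) \<and> 1 \<le> c \<longrightarrow> T i c \<le> T i (Suc c)) \<and>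
     (\<forall>i c. is_cell l (Suc i) c \<and> 1 \<le> i \<longrightarrow> T i c < T (Suc i) c)}"

definition col_height :: "nat \<Rightarrow> (nat \<Rightarrow> nat) \<Rightarrow> nat \<Rightarrow> nat" where
  "col_height r l c = card {i. 1 \<le> i \<and> i \<le> r \<and> c \<le> l i}"

definition cells :: "nat \<Rightarrow> (nat \<Rightarrow> nat) \<Rightarrow> (nat \<times> nat) list" where
  "cells r l = concat (map (\<lambda>c. map (\<lambda>i. (i, c)) [1..<col_height r l c + 1]) (rev [1..<l 1 + 1]))"

definition reading_word :: "nat \<Rightarrow> (nat \<Rightarrow> nat) \<Rightarrow> tab \<Rightarrow> nat list" where
  "reading_word r l T = map (\<lambda>(i, c). T i c) (cells r l)"

text \<open>For a word w and colour i, the signature is the list of positions p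
  with w!p = i (sign +, encoded True) or w!p = i+1 (sign -, encoded False), in order.
  Adjacent +- pairs are cancelled repeatedly (a stack-based scan).\<close>
definition signature :: "nat \<Rightarrow> nat list \<Rightarrow> (nat \<times> bool) list" where
  "signature i w = map (\<lambda>p. (p, w ! p = i)) (filter (\<lambda>p. w ! p = i \<or> w ! p = i + 1) [0..<length w])"

fun cancel_step :: "(nat \<times> bool) list \<Rightarrow> nat \<times> bool \<Rightarrow> (nat \<times> bool) list" where
  "cancel_step ((q, True) # st) (p, False) = st"
| "cancel_step st x = x # st"

definition reduced_signature :: "nat \<Rightarrow> nat list \<Rightarrow> (nat \<times> bool) list" where
  "reduced_signature i w = rev (foldl cancel_step [] (signature i w))"

text \<open>Position acted on by e_i: the rightmost remaining minus (None means e_i gives 0).\<close>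
definition e_pos :: "nat \<Rightarrow> nat list \<Rightarrow> nat option" where
  "e_pos i w = (let ms = map fst (filter (\<lambda>x. \<not> snd x) (reduced_signature i w))
                in if ms = [] then None else Some (last ms))"

text \<open>Kashiwara operator e_i on tableaux of shape l (None represents 0): the entry
  i+1 at the selected factor is changed to i.\<close>
definition e_tab :: "nat \<Rightarrow> (nat \<Rightarrow> nat) \<Rightarrow> nat \<Rightarrow> tab \<Rightarrow> tab option" where
  "e_tab r l i T = (case e_pos i (reading_word r l T) of
      None \<Rightarrow> None
    | Some p \<Rightarrow> (case cells r l ! p of (a, c) \<Rightarrow> Some (T(a := (T a)(c := i)))))"

fun e_pow :: "nat \<Rightarrow> (nat \<Rightarrow> nat) \<Rightarrow> nat \<Rightarrow> nat \<Rightarrow> tab \<Rightarrow> tab option" where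
  "e_pow r l i 0 T = Some T"
| "e_pow r l i (Suc n) T = Option.bind (e_pow r l i n T) (e_tab r l i)"

definition eps :: "nat \<Rightarrow> (nat \<Rightarrow> nat) \<Rightarrow> nat \<Rightarrow> tab \<Rightarrow> nat" where
  "eps r l i T = (GREATEST a. e_pow r l i a T \<noteq> None)"

definition long_word :: "nat \<Rightarrow> nat list" where
  "long_word r = concat (map (\<lambda>m. rev [1..<m + 1]) [1..<r + 1])"

fun bzl :: "nat \<Rightarrow> (nat \<Rightarrow> nat) \<Rightarrow> nat list \<Rightarrow> tab \<Rightarrow> nat list \<times> tab" where
  "bzl r l [] T = ([], T)"
| "bzl r l (i # is) T =
     (let a = eps r l i T; T' = the (e_pow r l i a T); (as, T'') = bzl r l is T'
      in (a # as, T''))"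

definition bb :: "nat \<Rightarrow> (nat \<Rightarrow> nat) \<Rightarrow> tab \<Rightarrow> nat \<Rightarrow> nat \<Rightarrow> nat" where
  "bb r l T i j = (if i = r + 1 \<or> j = r + 1 then 0
                   else card {c. 1 \<le> c \<and> c \<le> l i \<and> j + 1 \<le> T i c})"

definition boxes_in_row :: "(nat \<Rightarrow> nat) \<Rightarrow> tab \<Rightarrow> nat \<Rightarrow> nat \<Rightarrow> nat" where
  "boxes_in_row l T i v = card {c. 1 \<le> c \<and> c \<le> l i \<and> T i c = v}"

end

theory Submission
  imports Defs
begin

definition prec :: "nat \<times> nat \<Rightarrow> nat \<times> nat \<Rightarrow> bool" where
  "prec a b \<longleftrightarrow> snd b < snd a \<or> (snd a = snd b \<and> fst a < fst b)"

lemma sorted_cols: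
  "sorted_wrt prec (concat (map (\<lambda>c. map (\<lambda>i. (i, c)) [1..<h c + 1]) (rev [1..<n + 1])))"
proof (induction n)
  case 0 then show ?case by simp
next
  case (Suc n)
  have e: "rev [1..<Suc n + 1] = Suc n # rev [1..<n+1]" by simp
  have c1: "sorted_wrt prec (map (\<lambda>i. (i, Suc n)) [1..<h (Suc n) + 1])"
    unfolding sorted_wrt_map
    by (rule sorted_wrt_mono_rel[OF _ sorted_wrt_upt]) (simp add: prec_def)
  have c2: "\<forall>x\<in>set (map (\<lambda>i. (i, Suc n)) [1..<h (Suc n) + 1]).
      \<forall>y\<in>set (concat (map (\<lambda>c. map (\<lambda>i. (i, c)) [1..<h c + 1]) (rev [1..<n + 1]))). prec x y"
    by (auto simp: prec_def)
  show ?case unfolding e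
    using c1 c2 Suc.IH by (simp add: sorted_wrt_append del: upt_Suc)
qed

lemma set_cols: "set (concat (map (\<lambda>c. map (\<lambda>i. (i, c)) [1..<h c + 1]) (rev [1..<n + 1])))
   = {(i,c). 1 \<le> c \<and> c \<le> n \<and> 1 \<le> i \<and> i \<le> h c}"
proof (intro set_eqI iffI)
  fix z assume "z \<in> {(i,c). 1 \<le> c \<and> c \<le> n \<and> 1 \<le> i \<and> i \<le> h c}"
  then obtain i c where z: "z = (i,c)" "1 \<le> c" "c \<le> n" "1 \<le> i" "i \<le> h c" by auto
  then show "z \<in> set (concat (map (\<lambda>c. map (\<lambda>i. (i, c)) [1..<h c + 1]) (rev [1..<n + 1])))"
    by (auto simp del: upt_Suc intro!: bexI[where x=c])
qed (auto simp del: upt_Suc)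

lemma fold_false:
  "(\<forall>z\<in>set xs. \<not> snd z) \<Longrightarrow> (\<forall>z\<in>set st. \<not> snd z) \<Longrightarrow> foldl cancel_step st xs = rev xs @ st"
proof (induction xs arbitrary: st)
  case Nil then show ?case by simp
next
  case (Cons x xs)
  obtain p s where x: "x = (p,s)" by force
  with Cons have s: "\<not> s" by auto
  have "cancel_step st x = x # st"
  proof (cases st)
    case Nil then show ?thesis by (simp add: x s)
  next
    case (Cons y ys)
    obtain q t where y: "y = (q,t)" by force
    with Cons.prems local.Cons have "\<not> t" by auto
    then show ?thesis by (simp add: x s local.Cons y)
  qed
  then show ?case using Cons by simp
qed

lemma fold_tail:
  fixes w :: "nat list"
  assumes H: "\<forall>q. L \<le> q \<and> q < length w \<and> w!q = Suc c \<longrightarrow> L < q \<and> w!(q-1) = c"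
    and "L \<le> n" "n \<le> length w"
  shows "\<exists>zs. foldl cancel_step st (map (\<lambda>p. (p, w!p = c)) (filter (\<lambda>p. w!p = c \<or> w!p = c+1) [L..<n]))
     = zs @ st \<and> (\<forall>z\<in>set zs. snd z) \<and> (L < n \<and> w!(n-1) = c \<longrightarrow> zs \<noteq> [] \<and> hd zs = (n-1, True))"
  using assms(2,3)
proof (induction n rule: dec_induct)
  case base then show ?case by simp
next
  case (step n)
  then obtain zs where zs: "foldl cancel_step st (map (\<lambda>p. (p, w!p = c)) (filter (\<lambda>p. w!p = c \<or> w!p = c+1) [L..<n]))
     = zs @ st" "\<forall>z\<in>set zs. snd z" "L < n \<and> w!(n-1) = c \<longrightarrow> zs \<noteq> [] \<and> hd zs = (n-1, True)"
    by auto
  have u: "[L..<Suc n] = [L..<n] @ [n]" using step by simp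
  consider "w!n = c" | "w!n = Suc c" | "w!n \<noteq> c \<and> w!n \<noteq> Suc c" by blast
  then show ?case
  proof cases
    case 1
    then show ?thesis using zs unfolding u
      by (intro exI[of _ "(n,True) # zs"]) auto
  next
    case 2
    with H step have "L < n \<and> w!(n-1) = c" by auto
    with zs have zz: "zs = (n-1,True) # tl zs" by (cases zs) auto
    have "foldl cancel_step st (map (\<lambda>p. (p, w!p = c)) (filter (\<lambda>p. w!p = c \<or> w!p = c+1) [L..<Suc n]))
       = cancel_step (zs @ st) (n, False)" unfolding u using zs 2 by simp
    also have "\<dots> = tl zs @ st" by (subst zz) simp
    moreover have "\<forall>z\<in>set (tl zs). snd z" using zs(2) by (metis list.sel(3) list.set_intros(2) zz)
    ultimately show ?thesis using 2 by (intro exI[of _ "tl zs"]) auto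
  next
    case 3
    then show ?thesis using zs unfolding u by (intro exI[of _ zs]) auto
  qed
qed

lemma sorted_last_max: "sorted xs \<Longrightarrow> x \<in> set xs \<Longrightarrow> x \<le> last xs"
  by (induction xs) (auto simp: sorted_append)


lemma down_closed_card:
  fixes S :: "nat set"
  assumes "finite S" "\<forall>i\<in>S. 1 \<le> i" "\<forall>i\<in>S. \<forall>j. 1 \<le> j \<and> j \<le> i \<longrightarrow> j \<in> S"
  shows "S = {1..card S}"
proof (cases "S = {}")
  case True then show ?thesis by simp
next
  case False
  let ?n = "Max S"
  have "?n \<in> S" using False assms(1) by simp
  have S: "S = {1..?n}"
  proof
    show "S \<subseteq> {1..?n}" using assms(1,2) by auto
    show "{1..?n} \<subseteq> S" using \<open>?n \<in> S\<close> assms(3) by auto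
  qed
  obtain n where "S = {1..n}" using S by blast
  then show ?thesis by simp
qed

context
  fixes r :: nat and lam :: "nat \<Rightarrow> nat"
  assumes r1: "1 \<le> r"
begin

abbreviation "sh \<equiv> shape r lam"

lemma sh_anti: "p \<le> q \<Longrightarrow> sh q \<le> sh p"
  unfolding shape_def by (rule sum_mono2) auto

lemma sh_big: "r < p \<Longrightarrow> sh p = 0"
  unfolding shape_def by simp

lemma sh_pos: "1 \<le> p \<Longrightarrow> p \<le> r \<Longrightarrow> 1 \<le> sh p"
proof -
  assume "1 \<le> p" "p \<le> r"
  then have "{p..r} = insert p {Suc p..r}" by auto
  then show "1 \<le> sh p" unfolding shape_def by simp
qed

lemma cell_le_r: "is_cell sh p x \<Longrightarrow> p \<le> r"
  using sh_big[of p] unfolding is_cell_def by (cases "r < p") auto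

lemma colh: "1 \<le> x \<Longrightarrow> (1 \<le> p \<and> p \<le> col_height r sh x) \<longleftrightarrow> (1 \<le> p \<and> p \<le> r \<and> x \<le> sh p)"
proof -
  assume x: "1 \<le> x"
  let ?S = "{i. 1 \<le> i \<and> i \<le> r \<and> x \<le> sh i}"
  have "?S = {1..card ?S}"
  proof (rule down_closed_card)
    show "finite ?S" by (rule finite_subset[of _ "{..r}"]) auto
    show "\<forall>i\<in>?S. 1 \<le> i" by auto
    show "\<forall>i\<in>?S. \<forall>j. 1 \<le> j \<and> j \<le> i \<longrightarrow> j \<in> ?S"
      using sh_anti by (auto intro: le_trans)
  qed
  then have "p \<in> ?S \<longleftrightarrow> p \<in> {1..card ?S}" by simp
  then show ?thesis unfolding col_height_def by auto
qed

lemma set_cells: "set (cells r sh) = {(p,x). is_cell sh p x}"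
proof -
  have "set (cells r sh) = {(i,c). 1 \<le> c \<and> c \<le> sh 1 \<and> 1 \<le> i \<and> i \<le> col_height r sh c}"
    unfolding cells_def by (rule set_cols)
  also have "\<dots> = {(p,x). is_cell sh p x}"
  proof (intro set_eqI iffI)
    fix z assume "z \<in> {(i,c). 1 \<le> c \<and> c \<le> sh 1 \<and> 1 \<le> i \<and> i \<le> col_height r sh c}"
    then show "z \<in> {(p,x). is_cell sh p x}" using colh unfolding is_cell_def by auto
  next
    fix z assume "z \<in> {(p,x). is_cell sh p x}"
    then obtain p x where z: "z = (p,x)" "is_cell sh p x" by auto
    then have "p \<le> r" using z(2) by (simp add: cell_le_r)
    moreover have "sh p \<le> sh 1" using z sh_anti unfolding is_cell_def by auto
    ultimately show "z \<in> {(i,c). 1 \<le> c \<and> c \<le> sh 1 \<and> 1 \<le> i \<and> i \<le> col_height r sh c}"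
      using z colh[of x p] unfolding is_cell_def by auto
  qed
  finally show ?thesis .
qed

lemma sorted_cells: "sorted_wrt prec (cells r sh)"
  unfolding cells_def by (rule sorted_cols)

lemma cells_lt: "n < n' \<Longrightarrow> n' < length (cells r sh) \<Longrightarrow> prec (cells r sh ! n) (cells r sh ! n')"
  using sorted_cells by (simp add: sorted_wrt_iff_nth_less)

lemma cells_lt_iff: "n < length (cells r sh) \<Longrightarrow> n' < length (cells r sh) \<Longrightarrow>
   prec (cells r sh ! n) (cells r sh ! n') \<longleftrightarrow> n < n'"
proof
  assume a: "n < length (cells r sh)" "n' < length (cells r sh)" "prec (cells r sh ! n) (cells r sh ! n')"
  show "n < n'"
  proof (rule ccontr)
    assume "\<not> n < n'"
    then consider "n = n'" | "n' < n" by linarith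
    then show False
    proof cases
      case 1 then show ?thesis using a by (auto simp: prec_def)
    next
      case 2 then show ?thesis using cells_lt[of n' n] a by (auto simp: prec_def)
    qed
  qed
qed (rule cells_lt)

lemma cell_pos: "is_cell sh p x \<Longrightarrow> \<exists>n < length (cells r sh). cells r sh ! n = (p,x)"
  using set_cells by (metis (mono_tags, lifting) case_prodI in_set_conv_nth mem_Collect_eq)

lemma cell_of_pos: "n < length (cells r sh) \<Longrightarrow> is_cell sh (fst (cells r sh ! n)) (snd (cells r sh ! n))"
  using set_cells nth_mem by fastforce

lemma cells_adj:
  assumes "n < length (cells r sh)" "n' < length (cells r sh)"
    "cells r sh ! n = (p,x)" "cells r sh ! n' = (Suc p, x)"
  shows "n' = Suc n"
proof -
  have "n < n'" using cells_lt_iff[OF assms(1,2)] assms(3,4) by (simp add: prec_def)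
  show ?thesis
  proof (rule ccontr)
    assume "n' \<noteq> Suc n"
    with \<open>n < n'\<close> have "Suc n < n'" by simp
    then have "prec (cells r sh ! n) (cells r sh ! Suc n)" "prec (cells r sh ! Suc n) (cells r sh ! n')"
      using cells_lt[of n "Suc n"] cells_lt[of "Suc n" n'] assms by auto
    then show False using assms(3,4) by (auto simp: prec_def)
  qed
qed

lemma cell_up: "is_cell sh p x \<Longrightarrow> 1 \<le> q \<Longrightarrow> q \<le> p \<Longrightarrow> is_cell sh q x"
  using sh_anti unfolding is_cell_def by (meson le_trans)

lemma cell_left: "is_cell sh p x \<Longrightarrow> 1 \<le> y \<Longrightarrow> y \<le> x \<Longrightarrow> is_cell sh p y"
  unfolding is_cell_def by auto

context
  fixes T :: tab
  assumes TS: "T \<in> SSYT r sh"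
begin

lemma ss_range: "is_cell sh p x \<Longrightarrow> 1 \<le> T p x \<and> T p x \<le> r + 1"
  using TS unfolding SSYT_def by auto

lemma ss_zero: "\<not> is_cell sh p x \<Longrightarrow> T p x = 0"
  using TS unfolding SSYT_def by auto

lemma ss_row: "is_cell sh p x \<Longrightarrow> 1 \<le> y \<Longrightarrow> y \<le> x \<Longrightarrow> T p y \<le> T p x"
proof (induction x rule: nat_less_induct)
  case (1 x)
  show ?case
  proof (cases "y = x")
    case False
    with 1 obtain x' where x': "x = Suc x'" "y \<le> x'" by (cases x) auto
    have c': "is_cell sh p x'" using 1(2,3) x' cell_left by auto
    have "T p y \<le> T p x'" using 1 x' c' by auto
    also have "T p x' \<le> T p x" using TS 1 x' c' unfolding SSYT_def is_cell_def by auto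
    finally show ?thesis .
  qed simp
qed

lemma ss_col: "is_cell sh p x \<Longrightarrow> 1 \<le> q \<Longrightarrow> q < p \<Longrightarrow> T q x < T p x"
proof (induction p rule: nat_less_induct)
  case (1 p)
  obtain p' where p': "p = Suc p'" "q \<le> p'" using 1 by (cases p) auto
  have c': "is_cell sh p' x" using 1 p' cell_up by auto
  have s: "T p' x < T p x" using TS 1 p' c' unfolding SSYT_def is_cell_def by auto
  show ?case
  proof (cases "q = p'")
    case False
    then have "T q x < T p' x" using 1 p' c' by auto
    then show ?thesis using s by simp
  qed (use s in simp)
qed

lemma ss_ge: "is_cell sh p x \<Longrightarrow> p \<le> T p x"
proof (induction p)
  case 0 then show ?case by simp
next
  case (Suc p)
  show ?case
  proof (cases "p = 0")
    case True then show ?thesis using ss_range Suc by auto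
  next
    case False
    then have "is_cell sh p x" using Suc cell_up by auto
    then show ?thesis using Suc ss_col[of "Suc p" x p] False by auto
  qed
qed

end

definition brel :: "(nat \<Rightarrow> nat) \<Rightarrow> tab \<Rightarrow> nat \<Rightarrow> tab \<Rightarrow> bool" where
 "brel l b m T \<longleftrightarrow> (\<forall>p x. is_cell l p x \<longrightarrow> (Suc m < b p x \<longrightarrow> T p x = b p x) \<and> (b p x \<le> Suc m \<longrightarrow> T p x \<le> Suc m))"

definition Iv :: "nat \<Rightarrow> (nat \<Rightarrow> nat) \<Rightarrow> tab \<Rightarrow> nat \<Rightarrow> nat \<Rightarrow> tab \<Rightarrow> bool" where
 "Iv rr l b m c T \<longleftrightarrow> T \<in> SSYT rr l \<and> brel l b m T \<and>
   (\<forall>p x. is_cell l p x \<longrightarrow> T p x \<le> Suc m \<longrightarrow> (c < p \<longrightarrow> T p x = p) \<and>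
      (p \<le> c \<longrightarrow> (T p x = p \<or> T p x = Suc c) \<and> (T p x = Suc c \<longleftrightarrow> b p x = Suc m)))"

definition Gv :: "nat \<Rightarrow> (nat \<Rightarrow> nat) \<Rightarrow> tab \<Rightarrow> nat \<Rightarrow> nat \<Rightarrow> tab \<Rightarrow> bool" where
 "Gv rr l b m c T \<longleftrightarrow> T \<in> SSYT rr l \<and> brel l b m T \<and>
   (\<forall>p x. is_cell l p x \<longrightarrow> T p x \<le> Suc m \<longrightarrow> (c < p \<longrightarrow> T p x = p) \<and>
      (p \<le> c \<longrightarrow> T p x = p \<or> T p x = c \<or> T p x = Suc c) \<and>
      (p < c \<longrightarrow> (T p x = c \<or> T p x = Suc c) = (b p x = Suc m))) \<and>
   (\<forall>p x q y. is_cell l p x \<longrightarrow> is_cell l q y \<longrightarrow> p \<le> c \<longrightarrow> q \<le> c \<longrightarrow>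
       T p x = c \<longrightarrow> T q y = Suc c \<longrightarrow> x < y)"

definition Mset :: "(nat \<Rightarrow> nat) \<Rightarrow> nat \<Rightarrow> tab \<Rightarrow> (nat \<times> nat) set" where
  "Mset l c T = {(p,x). is_cell l p x \<and> p \<le> c \<and> T p x = Suc c}"

context
  fixes b :: tab
  assumes bS: "b \<in> SSYT r sh"
begin

lemma I00: "Iv r sh b 0 0 b"
  unfolding Iv_def brel_def
proof (intro conjI bS allI impI)
  fix p x assume "is_cell sh p x" "b p x \<le> Suc 0" "0 < p"
  then show "b p x = p" using ss_ge[OF bS, of p x] by simp
qed auto

lemma I_next: assumes "Iv r sh b m 0 T" shows "Iv r sh b (Suc m) (Suc m) T"
proof -
  have TS: "T \<in> SSYT r sh" and br: "brel sh b m T"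
   and rw: "\<And>p x. is_cell sh p x \<Longrightarrow> T p x \<le> Suc m \<Longrightarrow> 0 < p \<Longrightarrow> T p x = p"
    using assms unfolding Iv_def by auto
  have br2: "\<And>p x. is_cell sh p x \<Longrightarrow> Suc m < b p x \<Longrightarrow> T p x = b p x"
     "\<And>p x. is_cell sh p x \<Longrightarrow> b p x \<le> Suc m \<Longrightarrow> T p x \<le> Suc m"
    using br unfolding brel_def by auto
  show ?thesis unfolding Iv_def
  proof (intro conjI TS allI impI)
    show "brel sh b (Suc m) T" unfolding brel_def
    proof (intro allI impI conjI)
      fix p x assume "is_cell sh p x" "Suc (Suc m) < b p x" then show "T p x = b p x" using br2 by auto
    next
      fix p x assume "is_cell sh p x" "b p x \<le> Suc (Suc m)"
      then show "T p x \<le> Suc (Suc m)" using br2[of p x] by (cases "b p x \<le> Suc m") auto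
    qed
  next
    fix p x assume c: "is_cell sh p x" "T p x \<le> Suc (Suc m)" "Suc m < p"
    then show "T p x = p" using ss_ge[OF TS c(1)] by simp
  next
    fix p x assume c: "is_cell sh p x" "T p x \<le> Suc (Suc m)" "p \<le> Suc m"
    have p1: "0 < p" using c unfolding is_cell_def by auto
    show "T p x = p \<or> T p x = Suc (Suc m)"
      using c rw[OF c(1) _ p1] by (cases "T p x \<le> Suc m") auto
    show "(T p x = Suc (Suc m)) = (b p x = Suc (Suc m))"
    proof
      assume "T p x = Suc (Suc m)"
      then show "b p x = Suc (Suc m)" using br2[OF c(1)] by (cases "b p x \<le> Suc m") auto
    next
      assume "b p x = Suc (Suc m)"
      then show "T p x = Suc (Suc m)" using br2[OF c(1)] by auto
    qed
  qed
qed

lemma I_G: assumes "Iv r sh b m c T" "1 \<le> c" "c \<le> m" shows "Gv r sh b m c T"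
proof -
  have TS: "T \<in> SSYT r sh" and br: "brel sh b m T"
   and rw: "\<And>p x. is_cell sh p x \<Longrightarrow> T p x \<le> Suc m \<Longrightarrow> c < p \<Longrightarrow> T p x = p"
   and rw2: "\<And>p x. is_cell sh p x \<Longrightarrow> T p x \<le> Suc m \<Longrightarrow> p \<le> c \<Longrightarrow>
        (T p x = p \<or> T p x = Suc c) \<and> (T p x = Suc c \<longleftrightarrow> b p x = Suc m)"
    using assms unfolding Iv_def by auto
  show ?thesis unfolding Gv_def
  proof (intro conjI TS br allI impI)
    fix p x assume "is_cell sh p x" "T p x \<le> Suc m" "c < p" then show "T p x = p" using rw by auto
  next
    fix p x assume "is_cell sh p x" "T p x \<le> Suc m" "p \<le> c"
    then show "T p x = p \<or> T p x = c \<or> T p x = Suc c" using rw2 by blast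
  next
    fix p x assume "is_cell sh p x" "T p x \<le> Suc m" "p < c"
    then show "(T p x = c \<or> T p x = Suc c) = (b p x = Suc m)" using rw2[of p x] by auto
  next
    fix p x q y assume a: "is_cell sh p x" "is_cell sh q y" "p \<le> c" "q \<le> c" "T p x = c" "T q y = Suc c"
    have pc: "p = c" using rw2[OF a(1) _ a(3)] a(5) assms(3) by auto
    show "x < y"
    proof (rule ccontr)
      assume "\<not> x < y"
      then have yx: "y \<le> x" by simp
      have y1: "1 \<le> y" using a(2) unfolding is_cell_def by simp
      have cy: "is_cell sh c y" using a(1) pc y1 yx cell_left by auto
      have "T c y \<le> T c x" using ss_row[OF TS _ y1 yx] a(1) pc by simp
      then have le: "T c y \<le> c" using a(5) pc by simp
      show False
      proof (cases "q = c")
        case True then show False using le a(6) by simp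
      next
        case False
        then have "q < c" using a(4) by simp
        then have "T q y < T c y" using ss_col[OF TS cy] a(2) unfolding is_cell_def by simp
        then show False using le a(6) by simp
      qed
    qed
  qed
qed

lemma G_I: assumes "Gv r sh b m c T" "Mset sh c T = {}" "1 \<le> c" shows "Iv r sh b m (c - 1) T"
proof -
  have TS: "T \<in> SSYT r sh" and br: "brel sh b m T"
   and g1: "\<And>p x. is_cell sh p x \<Longrightarrow> T p x \<le> Suc m \<Longrightarrow> c < p \<Longrightarrow> T p x = p"
   and g2: "\<And>p x. is_cell sh p x \<Longrightarrow> T p x \<le> Suc m \<Longrightarrow> p \<le> c \<Longrightarrow> T p x = p \<or> T p x = c \<or> T p x = Suc c"
   and g3: "\<And>p x. is_cell sh p x \<Longrightarrow> T p x \<le> Suc m \<Longrightarrow> p < c \<Longrightarrow> (T p x = c \<or> T p x = Suc c) = (b p x = Suc m)"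
    using assms(1) unfolding Gv_def by auto
  have nM: "\<And>p x. is_cell sh p x \<Longrightarrow> p \<le> c \<Longrightarrow> T p x \<noteq> Suc c"
    using assms(2) unfolding Mset_def by auto
  show ?thesis unfolding Iv_def
  proof (intro conjI TS br allI impI)
    fix p x assume a: "is_cell sh p x" "T p x \<le> Suc m" "c - 1 < p"
    show "T p x = p"
    proof (cases "c < p")
      case True then show ?thesis using g1 a by auto
    next
      case False then have "p = c" using a by simp
      then show ?thesis using g2[OF a(1,2)] nM[OF a(1)] by auto
    qed
  next
    fix p x assume a: "is_cell sh p x" "T p x \<le> Suc m" "p \<le> c - 1"
    then have pc: "p < c" "p \<le> c" using assms(3) by auto
    show "T p x = p \<or> T p x = Suc (c - 1)" using g2[OF a(1,2) pc(2)] nM[OF a(1) pc(2)] assms(3) by auto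
    show "(T p x = Suc (c - 1)) = (b p x = Suc m)" using g3[OF a(1,2) pc(1)] nM[OF a(1) pc(2)] assms(3) by auto
  qed
qed

lemma rw_nth: "n < length (cells r sh) \<Longrightarrow> reading_word r sh T ! n = T (fst (cells r sh ! n)) (snd (cells r sh ! n))"
  unfolding reading_word_def by (simp add: case_prod_beta)

lemma epos_G:
  assumes G: "Gv r sh b m c T" and c1: "1 \<le> c" and cm: "c \<le> m" and mr: "m \<le> r"
  shows "\<exists>ms. e_pos c (reading_word r sh T) = (if ms = [] then None else Some (last ms)) \<and> sorted ms \<and>
     (\<forall>n. n \<in> set ms \<longleftrightarrow> n < length (cells r sh) \<and> cells r sh ! n \<in> Mset sh c T)"
proof -
  define CL where "CL = cells r sh"
  define w where "w = reading_word r sh T"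
  define len where "len = length CL"
  have lw: "length w = len" unfolding w_def len_def CL_def reading_word_def by simp
  have wn: "\<And>n. n < len \<Longrightarrow> w ! n = T (fst (CL ! n)) (snd (CL ! n))"
    unfolding w_def CL_def len_def using rw_nth by simp
  have TS: "T \<in> SSYT r sh" and br: "brel sh b m T"
   and g1: "\<And>p x. is_cell sh p x \<Longrightarrow> T p x \<le> Suc m \<Longrightarrow> c < p \<Longrightarrow> T p x = p"
   and gd: "\<And>p x q y. is_cell sh p x \<Longrightarrow> is_cell sh q y \<Longrightarrow> p \<le> c \<Longrightarrow> q \<le> c \<Longrightarrow>
       T p x = c \<Longrightarrow> T q y = Suc c \<Longrightarrow> x < y"
    using G unfolding Gv_def by auto
  have cellpos: "\<And>n. n < len \<Longrightarrow> is_cell sh (fst (CL ! n)) (snd (CL ! n))"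
    unfolding CL_def len_def by (rule cell_of_pos)
  have plus: "\<And>n. n < len \<Longrightarrow> w ! n = c \<Longrightarrow> fst (CL ! n) \<le> c"
  proof (rule ccontr)
    fix n assume a: "n < len" "w ! n = c" "\<not> fst (CL ! n) \<le> c"
    then have "T (fst (CL ! n)) (snd (CL ! n)) = fst (CL ! n)" using g1[OF cellpos[OF a(1)]] wn cm by auto
    then show False using a wn by auto
  qed
  have Mpos: "\<And>n n'. n < len \<Longrightarrow> CL ! n \<in> Mset sh c T \<Longrightarrow> n' < len \<Longrightarrow> w ! n' = c \<Longrightarrow> n < n'"
  proof -
    fix n n' assume a: "n < len" "CL ! n \<in> Mset sh c T" "n' < len" "w ! n' = c"
    have "snd (CL ! n') < snd (CL ! n)"
      using gd[OF cellpos[OF a(3)] cellpos[OF a(1)] plus[OF a(3,4)]] a wn[OF a(3)] unfolding Mset_def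
      by (auto simp: case_prod_beta)
    then have "prec (CL ! n) (CL ! n')" unfolding prec_def by simp
    then show "n < n'" using cells_lt_iff a unfolding CL_def len_def by blast
  qed
  have minus: "\<And>n. n < len \<Longrightarrow> w ! n = Suc c \<Longrightarrow> CL ! n \<notin> Mset sh c T \<Longrightarrow> 0 < n \<and> w ! (n - 1) = c"
  proof -
    fix n assume a: "n < len" "w ! n = Suc c" "CL ! n \<notin> Mset sh c T"
    obtain q y where qy: "CL ! n = (q, y)" by force
    have cq: "is_cell sh q y" using cellpos[OF a(1)] qy by simp
    have Tq: "T q y = Suc c" using a wn qy by simp
    have "c < q" using a(3) cq Tq qy unfolding Mset_def by auto
    then have qc: "q = Suc c" using g1[OF cq] Tq cm by simp
    have cc: "is_cell sh c y" using cell_up[OF cq c1] qc by simp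
    have "T c y < T q y" using ss_col[OF TS cq c1] qc by simp
    moreover have "c \<le> T c y" using ss_ge[OF TS cc] .
    ultimately have Tc: "T c y = c" using Tq by simp
    obtain n0 where n0: "n0 < len" "CL ! n0 = (c, y)" using cell_pos[OF cc] unfolding CL_def len_def by blast
    have "n = Suc n0" using cells_adj[of n0 n c y] n0 a(1) qy qc unfolding CL_def len_def by simp
    then show "0 < n \<and> w ! (n - 1) = c" using wn[OF n0(1)] n0 Tc by simp
  qed
  define L where "L = (if \<exists>n<len. w ! n = c then LEAST n. n < len \<and> w ! n = c else len)"
  have L1: "L \<le> len"
  proof (cases "\<exists>n<len. w ! n = c")
    case True
    then obtain n where "n < len" "w ! n = c" by blast
    then have "(LEAST n. n < len \<and> w ! n = c) \<le> n" by (intro Least_le) simp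
    then show ?thesis using True \<open>n < len\<close> unfolding L_def by simp
  next
    case False then show ?thesis unfolding L_def by (simp only: if_False)
  qed
  have L2: "\<And>n. n < L \<Longrightarrow> w ! n \<noteq> c"
  proof
    fix n assume a: "n < L" "w ! n = c"
    then have nl: "n < len" using L1 by simp
    then have ex: "\<exists>n<len. w ! n = c" using a by blast
    have "(LEAST n. n < len \<and> w ! n = c) \<le> n" using a nl by (intro Least_le) simp
    then show False using a ex unfolding L_def by simp
  qed
  have L3: "\<And>n. n < len \<Longrightarrow> w ! n = c \<Longrightarrow> L \<le> n"
    using L2 not_le by blast
  define ms where "ms = filter (\<lambda>n. w ! n = Suc c) [0..<L]"
  have mem: "\<And>n. n \<in> set ms \<longleftrightarrow> n < len \<and> CL ! n \<in> Mset sh c T"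
  proof
    fix n assume "n \<in> set ms"
    then have a: "n < L" "w ! n = Suc c" unfolding ms_def by auto
    then have nl: "n < len" using L1 by simp
    have "CL ! n \<in> Mset sh c T"
    proof (rule ccontr)
      assume "CL ! n \<notin> Mset sh c T"
      then have "w ! (n - 1) = c" "0 < n" using minus nl a by auto
      moreover have "n - 1 < L" using a by simp
      ultimately show False using L2[of "n - 1"] by simp
    qed
    then show "n < len \<and> CL ! n \<in> Mset sh c T" using nl by simp
  next
    fix n assume a: "n < len \<and> CL ! n \<in> Mset sh c T"
    have "n < L"
    proof (cases "\<exists>n<len. w ! n = c")
      case True
      then have "(LEAST n. n < len \<and> w ! n = c) < len \<and> w ! (LEAST n. n < len \<and> w ! n = c) = c"
        by (metis (mono_tags, lifting) LeastI)
      then show ?thesis using Mpos[of n "LEAST n. n < len \<and> w ! n = c"] a True unfolding L_def by simp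
    next
      case False then have "L = len" unfolding L_def by (simp only: if_False)
      then show ?thesis using a by simp
    qed
    moreover have "w ! n = Suc c" using a wn unfolding Mset_def by (auto simp: case_prod_beta)
    ultimately show "n \<in> set ms" unfolding ms_def by simp
  qed
  define Q where "Q = (\<lambda>p. w ! p = c \<or> w ! p = c + 1)"
  define f where "f = (\<lambda>p. (p, w ! p = c))"
  define xs where "xs = map f (filter Q [0..<L])"
  define ys where "ys = map f (filter Q [L..<len])"
  have sig: "signature c w = xs @ ys"
  proof -
    have "[0..<len] = [0..<L] @ [L..<len]" using L1 by (metis le0 upt_add_eq_append add_0 le_add_diff_inverse)
    then show ?thesis unfolding signature_def xs_def ys_def f_def Q_def lw by simp
  qed
  have xsF: "\<forall>z\<in>set xs. \<not> snd z" unfolding xs_def f_def using L2 by auto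
  have f1: "foldl cancel_step [] xs = rev xs" using fold_false[OF xsF, of "[]"] by simp
  have H: "\<forall>q. L \<le> q \<and> q < length w \<and> w!q = Suc c \<longrightarrow> L < q \<and> w!(q-1) = c"
  proof (intro allI impI)
    fix q assume a: "L \<le> q \<and> q < length w \<and> w!q = Suc c"
    have "CL ! q \<notin> Mset sh c T" using mem[of q] a lw unfolding ms_def by auto
    then have "0 < q \<and> w ! (q - 1) = c" using minus a lw by simp
    moreover have "q - 1 < len" using a lw by linarith
    ultimately have "L \<le> q - 1" using L3[of "q - 1"] by blast
    then have "L < q" using \<open>0 < q \<and> w ! (q - 1) = c\<close> by linarith
    then show "L < q \<and> w!(q-1) = c" using \<open>0 < q \<and> w ! (q - 1) = c\<close> by simp
  qed
  have "\<exists>zs. foldl cancel_step (rev xs) ys = zs @ rev xs \<and> (\<forall>z\<in>set zs. snd z)"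
  proof -
    have "L \<le> length w" using L1 lw by simp
    from fold_tail[OF H this order.refl, of "rev xs"] show ?thesis
      unfolding ys_def f_def Q_def lw by blast
  qed
  then obtain zs where zs: "foldl cancel_step (rev xs) ys = zs @ rev xs" "\<forall>z\<in>set zs. snd z"
    by blast
  have red: "reduced_signature c w = xs @ rev zs"
    unfolding reduced_signature_def sig foldl_append f1 zs by simp
  have "filter (\<lambda>x. \<not> snd x) (xs @ rev zs) = xs" using xsF zs(2) by simp
  moreover have "map fst xs = ms"
  proof -
    have "filter Q [0..<L] = ms" unfolding ms_def Q_def using L2 by (intro filter_cong) auto
    then show ?thesis unfolding xs_def f_def by (simp add: comp_def)
  qed
  ultimately have "e_pos c w = (if ms = [] then None else Some (last ms))"
    unfolding e_pos_def red by simp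
  moreover have "sorted ms" unfolding ms_def by (rule sorted_wrt_filter) simp
  ultimately show ?thesis using mem unfolding w_def CL_def len_def by blast
qed

lemma e_none:
  assumes G: "Gv r sh b m c T" and c1: "1 \<le> c" and cm: "c \<le> m" and mr: "m \<le> r"
    and M: "Mset sh c T = {}"
  shows "e_tab r sh c T = None"
proof -
  obtain ms where ms: "e_pos c (reading_word r sh T) = (if ms = [] then None else Some (last ms))"
    "\<forall>n. n \<in> set ms \<longleftrightarrow> n < length (cells r sh) \<and> cells r sh ! n \<in> Mset sh c T"
    using epos_G[OF assms(1-4)] by blast
  have "ms = []" using ms(2) M by (cases ms) auto
  then show ?thesis unfolding e_tab_def using ms(1) by simp
qed

lemma e_step:
  assumes G: "Gv r sh b m c T" and c1: "1 \<le> c" and cm: "c \<le> m" and mr: "m \<le> r"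
    and M: "Mset sh c T \<noteq> {}"
  shows "\<exists>a x0 T'. e_tab r sh c T = Some T' \<and> (a, x0) \<in> Mset sh c T \<and> Gv r sh b m c T' \<and>
          Mset sh c T' = Mset sh c T - {(a, x0)}"
proof -
  obtain ms where ms: "e_pos c (reading_word r sh T) = (if ms = [] then None else Some (last ms))"
    "sorted ms" "\<forall>n. n \<in> set ms \<longleftrightarrow> n < length (cells r sh) \<and> cells r sh ! n \<in> Mset sh c T"
    using epos_G[OF assms(1-4)] by blast
  have TS: "T \<in> SSYT r sh" and br: "brel sh b m T"
   and g1: "\<And>p x. is_cell sh p x \<Longrightarrow> T p x \<le> Suc m \<Longrightarrow> c < p \<Longrightarrow> T p x = p"
   and g2: "\<And>p x. is_cell sh p x \<Longrightarrow> T p x \<le> Suc m \<Longrightarrow> p \<le> c \<Longrightarrow> T p x = p \<or> T p x = c \<or> T p x = Suc c"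
   and g3: "\<And>p x. is_cell sh p x \<Longrightarrow> T p x \<le> Suc m \<Longrightarrow> p < c \<Longrightarrow> (T p x = c \<or> T p x = Suc c) = (b p x = Suc m)"
   and gd: "\<And>p x q y. is_cell sh p x \<Longrightarrow> is_cell sh q y \<Longrightarrow> p \<le> c \<Longrightarrow> q \<le> c \<Longrightarrow>
       T p x = c \<Longrightarrow> T q y = Suc c \<Longrightarrow> x < y"
    using G unfolding Gv_def by auto
  have br1: "\<And>p x. is_cell sh p x \<Longrightarrow> Suc m < b p x \<Longrightarrow> T p x = b p x"
   and br2: "\<And>p x. is_cell sh p x \<Longrightarrow> b p x \<le> Suc m \<Longrightarrow> T p x \<le> Suc m"
    using br unfolding brel_def by auto
  obtain z where z: "z \<in> Mset sh c T" using M by blast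
  then obtain zn where "zn < length (cells r sh)" "cells r sh ! zn = z"
    using cell_pos unfolding Mset_def by blast
  then have "zn \<in> set ms" using ms(3) z by simp
  then have msne: "ms \<noteq> []" by auto
  define p0 where "p0 = last ms"
  have "p0 \<in> set ms" using msne unfolding p0_def by simp
  then have p0: "p0 < length (cells r sh)" "cells r sh ! p0 \<in> Mset sh c T" using ms(3) by auto
  obtain a x0 where ax: "cells r sh ! p0 = (a, x0)" by force
  have aM: "(a, x0) \<in> Mset sh c T" using p0 ax by simp
  then have ca: "is_cell sh a x0" "a \<le> c" "T a x0 = Suc c" unfolding Mset_def by auto
  have a1: "1 \<le> a" "1 \<le> x0" using ca unfolding is_cell_def by auto
  have left: "\<And>q y. (q, y) \<in> Mset sh c T \<Longrightarrow> (q, y) \<noteq> (a, x0) \<Longrightarrow> x0 < y"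
  proof -
    fix q y assume qM: "(q, y) \<in> Mset sh c T" and ne: "(q, y) \<noteq> (a, x0)"
    then have cq: "is_cell sh q y" "T q y = Suc c" unfolding Mset_def by auto
    obtain n where n: "n < length (cells r sh)" "cells r sh ! n = (q, y)"
      using cell_pos[OF cq(1)] by blast
    then have "n \<in> set ms" using ms(3) qM by simp
    then have "n \<le> p0" unfolding p0_def using sorted_last_max[OF ms(2)] by simp
    moreover have "n \<noteq> p0" using n ax ne by auto
    ultimately have "n < p0" by simp
    then have "prec (q, y) (a, x0)" using cells_lt[OF _ p0(1)] n ax by metis
    then consider "x0 < y" | "y = x0" "q < a" unfolding prec_def by auto
    then show "x0 < y"
    proof cases
      case 2
      have "1 \<le> q" using cq(1) unfolding is_cell_def by simp
      then have "T q x0 < T a x0" using ss_col[OF TS ca(1), of q] 2 by simp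
      then show ?thesis using 2 cq ca by simp
    qed
  qed
  define T' where "T' = T(a := (T a)(x0 := c))"
  have T'v: "\<And>p x. T' p x = (if p = a \<and> x = x0 then c else T p x)" unfolding T'_def by simp
  have et: "e_tab r sh c T = Some T'"
    unfolding e_tab_def ms(1) using msne ax by (simp add: p0_def T'_def)
  have T'S: "T' \<in> SSYT r sh"
    unfolding SSYT_def
  proof (rule CollectI, intro conjI; intro allI impI)
    fix i x assume "is_cell sh i x"
    then show "1 \<le> T' i x \<and> T' i x \<le> r + 1" using ss_range[OF TS] c1 cm mr T'v by auto
  next
    fix i x assume "\<not> is_cell sh i x"
    then show "T' i x = 0" using ss_zero[OF TS] ca T'v by auto
  next
    fix i x assume a: "is_cell sh i (Suc x) \<and> 1 \<le> x"
    have cx: "is_cell sh i x" using a cell_left by auto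
    have base: "T i x \<le> T i (Suc x)" using ss_row[OF TS, of i "Suc x" x] a by simp
    show "T' i x \<le> T' i (Suc x)"
    proof (cases "i = a \<and> Suc x = x0")
      case True
      have "T a x \<le> T a x0" using base True by simp
      moreover have "T a x \<noteq> Suc c"
      proof
        assume "T a x = Suc c"
        then have "(a, x) \<in> Mset sh c T" using cx True ca unfolding Mset_def by auto
        then show False using left[of a x] True by auto
      qed
      ultimately have "T a x \<le> c" using ca by simp
      then show ?thesis using True T'v by auto
    next
      case False
      show ?thesis
      proof (cases "i = a \<and> x = x0")
        case True
        then show ?thesis using T'v base ca by auto
      qed (use False T'v base in auto)
    qed
  next
    fix i x assume a: "is_cell sh (Suc i) x \<and> 1 \<le> i"
    have cx: "is_cell sh i x" using a cell_up[of "Suc i" x i] by auto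
    have base: "T i x < T (Suc i) x" using ss_col[OF TS, of "Suc i" x i] a by simp
    show "T' i x < T' (Suc i) x"
    proof (cases "Suc i = a \<and> x = x0")
      case True
      have le: "T i x \<le> Suc m" "i \<le> c" using base True ca cm by auto
      have "T i x \<noteq> c"
      proof
        assume "T i x = c"
        then show False using gd[OF cx ca(1) le(2) ca(2)] ca True by simp
      qed
      then have "T i x = i" using g2[OF cx le] base True ca by auto
      then show ?thesis using True T'v ca by auto
    next
      case False
      show ?thesis
      proof (cases "i = a \<and> x = x0")
        case True
        then show ?thesis using T'v base ca by auto
      qed (use False T'v base in auto)
    qed
  qed
  have G': "Gv r sh b m c T'"
    unfolding Gv_def
  proof (intro conjI T'S allI impI)
    show "brel sh b m T'" unfolding brel_def
    proof (intro allI impI conjI)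
      fix p x assume "is_cell sh p x" "Suc m < b p x"
      then show "T' p x = b p x" using br1 T'v ca cm by (cases "p = a \<and> x = x0") auto
    next
      fix p x assume "is_cell sh p x" "b p x \<le> Suc m"
      then show "T' p x \<le> Suc m" using br2 T'v cm by (cases "p = a \<and> x = x0") auto
    qed
  next
    fix p x assume "is_cell sh p x" "T' p x \<le> Suc m" "c < p"
    then show "T' p x = p" using g1 T'v ca by (cases "p = a \<and> x = x0") auto
  next
    fix p x assume "is_cell sh p x" "T' p x \<le> Suc m" "p \<le> c"
    then show "T' p x = p \<or> T' p x = c \<or> T' p x = Suc c" using g2 T'v by (cases "p = a \<and> x = x0") auto
  next
    fix p x assume a: "is_cell sh p x" "T' p x \<le> Suc m" "p < c"
    show "(T' p x = c \<or> T' p x = Suc c) = (b p x = Suc m)"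
    proof (cases "p = a \<and> x = x0")
      case True
      then show ?thesis using g3[of a x0] ca cm a T'v by auto
    next
      case False
      then have "T' p x = T p x" using T'v by auto
      then show ?thesis using g3[OF a(1) _ a(3)] a(2) by simp
    qed
  next
    fix p x q y assume a: "is_cell sh p x" "is_cell sh q y" "p \<le> c" "q \<le> c" "T' p x = c" "T' q y = Suc c"
    have qne: "\<not> (q = a \<and> y = x0)" using a T'v by auto
    then have Tq: "T q y = Suc c" using a T'v by auto
    then have qM: "(q, y) \<in> Mset sh c T" using a unfolding Mset_def by auto
    show "x < y"
    proof (cases "p = a \<and> x = x0")
      case True
      then show ?thesis using left[OF qM] qne by auto
    next
      case False
      then show ?thesis using gd[OF a(1-4)] a(5) T'v Tq by auto
    qed
  qed
  have "Mset sh c T' = Mset sh c T - {(a, x0)}"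
    unfolding Mset_def using T'v by auto
  then show ?thesis using et aM G' by blast
qed

lemma e_pow_Suc': "e_pow rr l i (Suc n) T = Option.bind (e_tab rr l i T) (e_pow rr l i n)"
proof (induction n)
  case 0 then show ?case by (cases "e_tab rr l i T") auto
next
  case (Suc n)
  show ?case by (simp only: e_pow.simps(2)[of _ _ _ "Suc n"] Suc) (cases "e_tab rr l i T"; simp)
qed

lemma e_pow_none: assumes "e_pow rr l i n T = None" "n \<le> n'" shows "e_pow rr l i n' T = None"
  using assms(2) by (induction n' rule: dec_induct) (use assms(1) in auto)

lemma M_finite: "finite (Mset sh c T)"
  by (rule finite_subset[of _ "{..c} \<times> {..sh 1}"]) (auto simp: Mset_def is_cell_def intro: le_trans[OF _ sh_anti])

lemma estring:
  assumes "Gv r sh b m c T" "1 \<le> c" "c \<le> m" "m \<le> r"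
  shows "\<exists>T'. e_pow r sh c (card (Mset sh c T)) T = Some T' \<and> Gv r sh b m c T' \<and> Mset sh c T' = {} \<and>
           e_pow r sh c (Suc (card (Mset sh c T))) T = None"
  using assms(1)
proof (induction "card (Mset sh c T)" arbitrary: T)
  case 0
  then have M: "Mset sh c T = {}" using M_finite by simp
  have "e_tab r sh c T = None" using e_none[OF 0(2) assms(2-4) M] .
  then show ?case using 0 M by simp
next
  case (Suc N)
  then have "Mset sh c T \<noteq> {}" by auto
  from e_step[OF Suc(3) assms(2-4) this] obtain a x0 T1 where
    T1: "e_tab r sh c T = Some T1" "(a, x0) \<in> Mset sh c T" "Gv r sh b m c T1"
        "Mset sh c T1 = Mset sh c T - {(a, x0)}" by blast
  have "N = card (Mset sh c T1)" using T1(2,4) Suc(2) M_finite by simp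
  from Suc(1)[OF this T1(3)] obtain T' where
    T': "e_pow r sh c N T1 = Some T'" "Gv r sh b m c T'" "Mset sh c T' = {}" "e_pow r sh c (Suc N) T1 = None"
    using \<open>N = card (Mset sh c T1)\<close> by auto
  have A: "e_pow r sh c (Suc N) T = Some T'"
  proof -
    have "e_pow r sh c (Suc N) T = Option.bind (e_tab r sh c T) (e_pow r sh c N)" by (rule e_pow_Suc')
    also have "\<dots> = e_pow r sh c N T1" using T1(1) by simp
    finally show ?thesis using T'(1) by simp
  qed
  have B: "e_pow r sh c (Suc (Suc N)) T = None"
  proof -
    have "e_pow r sh c (Suc (Suc N)) T = Option.bind (e_tab r sh c T) (e_pow r sh c (Suc N))" by (rule e_pow_Suc')
    also have "\<dots> = e_pow r sh c (Suc N) T1" using T1(1) by simp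
    finally show ?thesis using T'(4) by simp
  qed
  show ?case unfolding Suc(2)[symmetric] using A B T' by blast
qed

lemma estring2:
  assumes "Gv r sh b m c T" "1 \<le> c" "c \<le> m" "m \<le> r"
  shows "Iv r sh b m (c - 1) (the (e_pow r sh c (eps r sh c T) T))"
proof -
  obtain T' where T': "e_pow r sh c (card (Mset sh c T)) T = Some T'" "Gv r sh b m c T'" "Mset sh c T' = {}"
     "e_pow r sh c (Suc (card (Mset sh c T))) T = None"
    using estring[OF assms] by blast
  have "eps r sh c T = card (Mset sh c T)"
    unfolding eps_def
  proof (rule Greatest_equality)
    show "e_pow r sh c (card (Mset sh c T)) T \<noteq> None" using T' by simp
    fix y assume "e_pow r sh c y T \<noteq> None"
    then show "y \<le> card (Mset sh c T)" using e_pow_none[OF T'(4), of y] by (cases "y \<le> card (Mset sh c T)") auto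
  qed
  then show ?thesis using T' G_I[OF T'(2,3) assms(2)] by simp
qed

lemma snd_bzl_cons: "snd (bzl rr l (i # is) T) = snd (bzl rr l is (the (e_pow rr l i (eps rr l i T) T)))"
  by (simp add: Let_def split_beta)

lemma snd_bzl_append: "snd (bzl rr l (xs @ ys) T) = snd (bzl rr l ys (snd (bzl rr l xs T)))"
  by (induction xs arbitrary: T) (simp_all only: append.simps snd_bzl_cons, simp_all)

lemma block:
  "Iv r sh b m c T \<Longrightarrow> i \<le> c \<Longrightarrow> c \<le> m \<Longrightarrow> m \<le> r \<Longrightarrow>
     Iv r sh b m i (snd (bzl r sh (rev [Suc i..<Suc c]) T))"
proof (induction c arbitrary: T)
  case 0 then show ?case by simp
next
  case (Suc c)
  show ?case
  proof (cases "i = Suc c")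
    case True then show ?thesis using Suc by simp
  next
    case False
    then have ic: "i \<le> c" using Suc by simp
    have e: "rev [Suc i..<Suc (Suc c)] = Suc c # rev [Suc i..<Suc c]" using ic by simp
    have "Gv r sh b m (Suc c) T" using I_G[OF Suc(2)] Suc by simp
    then have "Iv r sh b m c (the (e_pow r sh (Suc c) (eps r sh (Suc c) T) T))"
      using estring2[of m "Suc c" T] Suc by simp
    then show ?thesis unfolding e snd_bzl_cons using Suc.IH ic Suc by simp
  qed
qed

lemma long_word_Suc: "long_word (Suc m) = long_word m @ rev [1..<Suc m + 1]"
  unfolding long_word_def by simp

lemma full: "m \<le> r \<Longrightarrow> Iv r sh b m 0 (snd (bzl r sh (long_word m) b))"
proof (induction m)
  case 0 then show ?case using I00 by (simp add: long_word_def)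
next
  case (Suc m)
  then have "Iv r sh b (Suc m) (Suc m) (snd (bzl r sh (long_word m) b))" using I_next by simp
  from block[OF this, of 0] Suc(2) show ?case unfolding long_word_Suc snd_bzl_append by simp
qed

lemma long_word_len: "2 * length (long_word m) = m * (m + 1)"
proof (induction m)
  case 0 then show ?case by (simp add: long_word_def)
qed (simp add: long_word_Suc)

lemma long_word_split: assumes "1 \<le> j" "j \<le> rr"
  shows "\<exists>rest. long_word rr = long_word (j - 1) @ rev [1..<j + 1] @ rest"
proof -
  have u0: "[1..<j + (rr + 1 - j)] = [1..<j] @ [j..<j + (rr + 1 - j)]"
    by (rule upt_add_eq_append) (use assms in simp)
  have e: "j + (rr + 1 - j) = rr + 1" using assms by simp
  have u: "[1..<rr + 1] = [1..<j] @ j # [Suc j..<rr + 1]"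
    using u0 unfolding e using upt_conv_Cons[of j "rr + 1"] assms by simp
  have "long_word (j - 1) = concat (map (\<lambda>m. rev [1..<m + 1]) [1..<j])"
    unfolding long_word_def using assms by simp
  then show ?thesis unfolding long_word_def u by auto
qed

lemma take_lw: assumes "1 \<le> i" "i \<le> j" "j \<le> rr" "k = j * (j - 1) div 2 + (j - i + 1)"
  shows "take (k - 1) (long_word rr) = long_word (j - 1) @ rev [Suc i..<Suc j]"
proof -
  obtain rest where rest: "long_word rr = long_word (j - 1) @ rev [1..<j + 1] @ rest"
    using long_word_split[of j rr] assms by auto
  have len: "length (long_word (j - 1)) = j * (j - 1) div 2"
    using long_word_len[of "j - 1"] assms by (simp add: mult.commute)
  have k: "k - 1 = length (long_word (j - 1)) + (j - i)" using assms len by simp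
  have u0: "[1..<Suc i + (j - i)] = [1..<Suc i] @ [Suc i..<Suc i + (j - i)]"
    by (rule upt_add_eq_append) simp
  have e: "Suc i + (j - i) = j + 1" using assms by simp
  have u: "[1..<j + 1] = [1..<Suc i] @ [Suc i..<Suc j]" using u0 unfolding e by simp
  have "take (j - i) (rev [1..<j + 1] @ rest) = rev [Suc i..<Suc j]"
    unfolding u by (simp add: take_append) arith
  then show ?thesis unfolding k rest by simp
qed

lemma final:
  assumes "1 \<le> i" "i \<le> j" "j \<le> r" "k = j * (j - 1) div 2 + (j - i + 1)"
  shows "let l = shape r lam; b' = snd (bzl r l (take (k - 1) (long_word r)) b) in
           int (l i) - int (bb r l b i j) = int (boxes_in_row l b' i i) \<and>
           int (l (i + 1)) - int (bb r l b (i + 1) (j + 1)) = int (boxes_in_row l b' (i + 1) (i + 1))"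
proof -
  define b' where "b' = snd (bzl r sh (take (k - 1) (long_word r)) b)"
  have b'e: "b' = snd (bzl r sh (rev [Suc i..<Suc j]) (snd (bzl r sh (long_word (j - 1)) b)))"
    unfolding b'_def take_lw[OF assms] snd_bzl_append ..
  have "Iv r sh b (j - 1) 0 (snd (bzl r sh (long_word (j - 1)) b))" using full assms by simp
  then have "Iv r sh b j j (snd (bzl r sh (long_word (j - 1)) b))" using I_next assms by fastforce
  then have I: "Iv r sh b j i b'" unfolding b'e using block assms by simp
  have TS: "b' \<in> SSYT r sh" and br1: "\<And>p x. is_cell sh p x \<Longrightarrow> Suc j < b p x \<Longrightarrow> b' p x = b p x"
   and br2: "\<And>p x. is_cell sh p x \<Longrightarrow> b p x \<le> Suc j \<Longrightarrow> b' p x \<le> Suc j"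
   and g1: "\<And>p x. is_cell sh p x \<Longrightarrow> b' p x \<le> Suc j \<Longrightarrow> i < p \<Longrightarrow> b' p x = p"
   and g2: "\<And>p x. is_cell sh p x \<Longrightarrow> b' p x \<le> Suc j \<Longrightarrow> p \<le> i \<Longrightarrow>
        (b' p x = p \<or> b' p x = Suc i) \<and> (b' p x = Suc i \<longleftrightarrow> b p x = Suc j)"
    using I unfolding Iv_def brel_def by auto
  have C1: "int (sh i) - int (bb r sh b i j) = int (boxes_in_row sh b' i i)"
  proof -
    let ?A = "{x. 1 \<le> x \<and> x \<le> sh i \<and> b' i x = i}"
    let ?B = "{x. 1 \<le> x \<and> x \<le> sh i \<and> j + 1 \<le> b i x}"
    have cl: "\<And>x. 1 \<le> x \<Longrightarrow> x \<le> sh i \<Longrightarrow> is_cell sh i x" using assms unfolding is_cell_def by simp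
    have A: "?A = {x. 1 \<le> x \<and> x \<le> sh i \<and> b i x \<le> j}"
    proof (intro set_eqI iffI)
      fix x assume a: "x \<in> ?A"
      then have c: "is_cell sh i x" using cl by simp
      have "b' i x \<le> Suc j" using a assms by simp
      then have "b i x \<le> Suc j" using br1[OF c] a assms by (cases "Suc j < b i x") auto
      moreover have "b i x \<noteq> Suc j" using g2[OF c] a assms by auto
      ultimately show "x \<in> {x. 1 \<le> x \<and> x \<le> sh i \<and> b i x \<le> j}" using a by auto
    next
      fix x assume a: "x \<in> {x. 1 \<le> x \<and> x \<le> sh i \<and> b i x \<le> j}"
      then have c: "is_cell sh i x" using cl by simp
      have "b' i x \<le> Suc j" using br2[OF c] a by simp
      then show "x \<in> ?A" using g2[OF c] a by auto
    qed
    have "?A \<union> ?B = {1..sh i}" unfolding A by auto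
    moreover have "?A \<inter> ?B = {}" unfolding A by auto
    ultimately have "card ?A + card ?B = sh i"
      by (metis (no_types, lifting) card_Un_disjoint card_atLeastAtMost diff_Suc_1 finite_Un finite_atLeastAtMost)
    moreover have "bb r sh b i j = card ?B" unfolding bb_def using assms by simp
    ultimately show ?thesis unfolding boxes_in_row_def by simp
  qed
  have C2: "int (sh (i + 1)) - int (bb r sh b (i + 1) (j + 1)) = int (boxes_in_row sh b' (i + 1) (i + 1))"
  proof (cases "i = r")
    case True
    then have "sh (i + 1) = 0" using sh_big by simp
    then show ?thesis using True unfolding boxes_in_row_def bb_def by simp
  next
    case False
    then have ir: "i + 1 \<le> r" using assms by simp
    let ?A = "{x. 1 \<le> x \<and> x \<le> sh (i+1) \<and> b' (i+1) x = i+1}"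
    have cl: "\<And>x. 1 \<le> x \<Longrightarrow> x \<le> sh (i+1) \<Longrightarrow> is_cell sh (i+1) x" unfolding is_cell_def by simp
    have A: "?A = {x. 1 \<le> x \<and> x \<le> sh (i+1) \<and> b (i+1) x \<le> Suc j}"
    proof (intro set_eqI iffI)
      fix x assume a: "x \<in> ?A"
      then have c: "is_cell sh (i+1) x" using cl by simp
      have "b' (i+1) x \<le> Suc j" using a assms by simp
      then have "b (i+1) x \<le> Suc j" using br1[OF c] a assms by (cases "Suc j < b (i+1) x") auto
      then show "x \<in> {x. 1 \<le> x \<and> x \<le> sh (i+1) \<and> b (i+1) x \<le> Suc j}" using a by auto
    next
      fix x assume a: "x \<in> {x. 1 \<le> x \<and> x \<le> sh (i+1) \<and> b (i+1) x \<le> Suc j}"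
      then have c: "is_cell sh (i+1) x" using cl by simp
      have "b' (i+1) x \<le> Suc j" using br2[OF c] a by simp
      then show "x \<in> ?A" using g1[OF c] a by auto
    qed
    show ?thesis
    proof (cases "j = r")
      case True
      have "?A = {1..sh (i+1)}" unfolding A using ss_range[OF bS] cl True by fastforce
      then show ?thesis using True unfolding boxes_in_row_def bb_def by simp
    next
      case False
      let ?B = "{x. 1 \<le> x \<and> x \<le> sh (i+1) \<and> j + 1 + 1 \<le> b (i+1) x}"
      have "?A \<union> ?B = {1..sh (i+1)}" unfolding A by auto
      moreover have "?A \<inter> ?B = {}" unfolding A by auto
      ultimately have "card ?A + card ?B = sh (i+1)"
        by (metis (no_types, lifting) card_Un_disjoint card_atLeastAtMost diff_Suc_1 finite_Un finite_atLeastAtMost)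
      moreover have "bb r sh b (i+1) (j+1) = card ?B" unfolding bb_def using ir False assms by simp
      ultimately show ?thesis unfolding boxes_in_row_def by simp
    qed
  qed
  show ?thesis using C1 C2 unfolding b'_def Let_def by simp
qed

end
end
theorem mainTheorem3:
  fixes r :: nat and lam :: "nat \<Rightarrow> nat" and b :: tab and i j k :: nat
  assumes "1 \<le> r"
    and "b \<in> SSYT r (shape r lam)"
    and "1 \<le> i" and "i \<le> j" and "j \<le> r"
    and "k = j * (j - 1) div 2 + (j - i + 1)"
  shows "let l = shape r lam; b' = snd (bzl r l (take (k - 1) (long_word r)) b) in
           int (l i) - int (bb r l b i j) = int (boxes_in_row l b' i i) \<and>
           int (l (i + 1)) - int (bb r l b (i + 1) (j + 1)) = int (boxes_in_row l b' (i + 1) (i + 1))"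
  by (rule final[OF assms(1) assms(2) assms(3) assms(4) assms(5) assms(6)])

end
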